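(* Let $n\ge1$, $m\ge0$, $a,b>0$, $I_{m,n,s}(x)=\int_s^x(1+t)^nt^m\,dt$, $\mu_s=\frac{(1+a)^na^mb+nI_{m,n-1,s}(a)}{I_{m,n,s}(a)}$ and $\tilde\psi_s(x)=\frac{\mu_sI_{m,n,s}(x)-nI_{m,n-1,s}(x)}{(1+x)^nx^m}$ for $s\in[0,a)$. Assume $\mu_0\le n$ and let $\lambda\in[0,a)$ be the unique solution of $\mu_\lambda(1+\lambda)=n$. Then for all $s\in(0,a)$ with $s\neq\lambda$ and all $x\in(0,a)$, $\tilde\psi_s(x)<\tilde\psi_\lambda(x)$. *)

theory Defs
  imports "HOL-Analysis.Analysis"
begin

definition Iint :: "real \<Rightarrow> nat \<Rightarrow> real \<Rightarrow> real \<Rightarrow> real" where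
  "Iint m n s x = (LBINT t=ereal s..ereal x. (1 + t) ^ n * t powr m)"

definition mu :: "real \<Rightarrow> nat \<Rightarrow> real \<Rightarrow> real \<Rightarrow> real \<Rightarrow> real" where
  "mu m n a b s = ((1 + a) ^ n * a powr m * b + real n * Iint m (n - 1) s a) / Iint m n s a"

definition psi_tilde :: "real \<Rightarrow> nat \<Rightarrow> real \<Rightarrow> real \<Rightarrow> real \<Rightarrow> real \<Rightarrow> real" where
  "psi_tilde m n a b s x =
     (mu m n a b s * Iint m n s x - real n * Iint m (n - 1) s x) / ((1 + x) ^ n * x powr m)"

end

theory Submission imports Defs begin

definition fw :: "real \<Rightarrow> nat \<Rightarrow> real \<Rightarrow> real" where
  "fw m k t = (1 + t) ^ k * (if m = 0 then 1 else t powr m)"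

definition PP :: "real \<Rightarrow> nat \<Rightarrow> real \<Rightarrow> real" where
  "PP m k x = integral {0..x} (fw m k)"

lemma fw_cont: "m \<ge> 0 \<Longrightarrow> continuous_on {0..B} (fw m k)"
  unfolding fw_def
  by (cases "m = 0") (auto intro!: continuous_intros continuous_on_powr')

lemma fw_pos: "m \<ge> 0 \<Longrightarrow> t > 0 \<Longrightarrow> fw m k t > 0"
  unfolding fw_def by auto

lemma PP_deriv:
  assumes "m \<ge> 0" "0 \<le> t" "t \<le> B"
  shows "(PP m k has_real_derivative fw m k t) (at t within {0..B})"
  unfolding PP_def[abs_def] using integral_has_real_derivative[OF fw_cont[OF assms(1)]] assms by auto

lemma PP_deriv_at:
  assumes "m \<ge> 0" "0 < t"
  shows "(PP m k has_real_derivative fw m k t) (at t)"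
proof -
  have "(PP m k has_real_derivative fw m k t) (at t within {0..t+1})"
    using PP_deriv assms by auto
  moreover have "t \<in> interior {0..t+1}" using assms by auto
  ultimately show ?thesis using at_within_interior by metis
qed

lemma PP_cont: "m \<ge> 0 \<Longrightarrow> continuous_on {0..B} (PP m k)"
  unfolding PP_def[abs_def]
  by (intro indefinite_integral_continuous_1 integrable_continuous_interval fw_cont)

lemma Iint_PP:
  assumes "m \<ge> 0" "0 \<le> s" "0 \<le> x"
  shows "Iint m k s x = PP m k x - PP m k s"
proof -
  have "Iint m k s x = (LBINT t=ereal s..ereal x. fw m k t)"
    unfolding Iint_def fw_def
    by (rule interval_integral_cong) (use assms in \<open>auto simp: einterval_def min_def max_def split: if_splits\<close>)
  also have "\<dots> = PP m k x - PP m k s"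
  proof (rule interval_integral_FTC_finite)
    show "continuous_on {min s x..max s x} (fw m k)"
      by (rule continuous_on_subset[OF fw_cont[OF assms(1), of "max s x"]]) (use assms in auto)
    fix y assume y: "min s x \<le> y" "y \<le> max s x"
    have "(PP m k has_real_derivative fw m k y) (at y within {0..max s x})"
      using PP_deriv assms y by auto
    then have "(PP m k has_real_derivative fw m k y) (at y within {min s x..max s x})"
      by (rule DERIV_subset) (use assms in auto)
    then show "(PP m k has_vector_derivative fw m k y) (at y within {min s x..max s x})"
      by (simp add: has_real_derivative_iff_has_vector_derivative)
  qed
  finally show ?thesis .
qed


lemma PP_strict:
  assumes "m \<ge> 0" "0 \<le> s" "s < x"
  shows "PP m k s < PP m k x"
proof -
  have c: "continuous_on {s..x} (PP m k)"
    by (rule continuous_on_subset[OF PP_cont[OF assms(1), of x]]) (use assms in auto)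
  have dif: "PP m k differentiable (at y)" if "s < y" "y < x" for y
  proof -
    have "y > 0" using that assms by linarith
    then show "PP m k differentiable (at y)"
      using PP_deriv_at[OF assms(1)] real_differentiable_def by blast
  qed
  obtain l z where z: "s < z" "z < x" "PP m k x - PP m k s = (x - s) * l"
    and d: "(PP m k has_real_derivative l) (at z)"
    using MVT[OF assms(3) c dif] by blast
  have "z > 0" using z assms by linarith
  then have "l = fw m k z" using DERIV_unique[OF d PP_deriv_at[OF assms(1), of z]] by blast
  then have "l > 0" using fw_pos[OF assms(1) \<open>z > 0\<close>] by simp
  then have "(x - s) * l > 0" using assms by simp
  then show ?thesis using z by linarith
qed

lemma fw_rel: "n \<ge> 1 \<Longrightarrow> fw m (n - 1) t * (1 + t) = fw m n t"
  proof -
  assume "n \<ge> 1"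
  then obtain k where "n = Suc k" by (cases n) auto
  then show ?thesis unfolding fw_def by (simp only: power_Suc diff_Suc_1) (simp add: algebra_simps)
qed


theorem corollary3p5:
  fixes n :: nat and m a b lam :: real
  assumes "n \<ge> 1" and "m \<ge> 0" and "a > 0" and "b > 0"
    and "mu m n a b 0 \<le> real n"
    and "0 \<le> lam" and "lam < a" and "mu m n a b lam * (1 + lam) = real n"
    and "\<forall>l. 0 \<le> l \<and> l < a \<and> mu m n a b l * (1 + l) = real n \<longrightarrow> l = lam"
  shows "\<forall>s x. 0 < s \<and> s < a \<and> s \<noteq> lam \<and> 0 < x \<and> x < a \<longrightarrow>
           psi_tilde m n a b s x < psi_tilde m n a b lam x"
proof (intro allI impI)
  fix s x assume sx: "0 < s \<and> s < a \<and> s \<noteq> lam \<and> 0 < x \<and> x < a"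
  define P where "P = PP m n"
  define Q where "Q = PP m (n - 1)"
  define A where "A = (1 + a) ^ n * a powr m * b"
  define M where "M = (\<lambda>t. (A + real n * (Q a - Q t)) / (P a - P t))"
  define g where "g = (\<lambda>t. M t * (1 + t) - real n)"
  define D where "D = (\<lambda>t. (- (real n * fw m (n - 1) t) * (P a - P t)
      - (A + real n * (Q a - Q t)) * (- fw m n t)) / ((P a - P t) * (P a - P t)))"
  have m0: "m \<ge> 0" using assms(1-8) by simp
  have npos: "real n > 0" using assms(1-8) by simp
  have Apos: "A > 0" using assms(1-8) unfolding A_def by simp
  have Ppos: "P a - P t > 0" if "0 \<le> t" "t < a" for t
    using PP_strict[OF m0 that] unfolding P_def by simp
  have Qle: "Q t \<le> Q a" if "0 \<le> t" "t < a" for t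
    using PP_strict[OF m0 that] unfolding Q_def by (simp add: less_imp_le)
  have mu_eq: "mu m n a b t = M t" if "0 \<le> t" "t < a" for t
  proof -
    have "0 \<le> a" using assms(1-8) by simp
    then show ?thesis
      unfolding mu_def M_def A_def P_def Q_def using Iint_PP[OF m0 that(1) \<open>0 \<le> a\<close>] by simp
  qed
  have uniq: "t = lam" if "0 \<le> t" "t < a" "g t = 0" for t
    using assms(9) mu_eq[OF that(1,2)] that unfolding g_def by auto
  have g0: "g 0 \<le> 0" using assms(5) mu_eq[of 0] assms(3) less_imp_le[OF assms(3)] unfolding g_def by simp
  have cP: "continuous_on {u..v} P" if "0 \<le> u" for u v
    unfolding P_def by (rule continuous_on_subset[OF PP_cont[OF m0, of v]]) (use that in auto)
  have cQ: "continuous_on {u..v} Q" if "0 \<le> u" for u v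
    unfolding Q_def by (rule continuous_on_subset[OF PP_cont[OF m0, of v]]) (use that in auto)
  have cM: "continuous_on {u..v} M" if "0 \<le> u" "v < a" for u v
  proof -
    have "\<forall>t\<in>{u..v}. P a - P t \<noteq> 0"
    proof
      fix t assume "t \<in> {u..v}"
      then have "0 \<le> t" "t < a" using that by auto
      then show "P a - P t \<noteq> 0" using Ppos[of t] by simp
    qed
    then show ?thesis unfolding M_def
      by (intro continuous_on_divide continuous_intros cP cQ that)
  qed
  have cg: "continuous_on {u..v} g" if "0 \<le> u" "v < a" for u v
    unfolding g_def by (intro continuous_intros cM that)
  have dM: "(M has_real_derivative D t) (at t)" if "0 < t" "t < a" for t
  proof -
    have dQ: "(Q has_real_derivative fw m (n - 1) t) (at t)"
      unfolding Q_def using PP_deriv_at[OF m0 that(1)] .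
    have dP: "(P has_real_derivative fw m n t) (at t)"
      unfolding P_def using PP_deriv_at[OF m0 that(1)] .
    have d1: "((\<lambda>t. A + real n * (Q a - Q t)) has_real_derivative (- (real n * fw m (n - 1) t))) (at t)"
      by (auto intro!: derivative_eq_intros dQ)
    have d2: "((\<lambda>t. P a - P t) has_real_derivative (- fw m n t)) (at t)"
      by (auto intro!: derivative_eq_intros dP)
    have "P a - P t \<noteq> 0" using Ppos[of t] that by simp
    from DERIV_divide[OF d1 d2 this] show ?thesis unfolding M_def D_def .
  qed
  have Dg: "D t = (fw m (n - 1) t / (P a - P t)) * g t" if "0 < t" "t < a" for t
  proof -
    have R: "P a - P t \<noteq> 0" using Ppos[of t] that by simp
    have W: "fw m n t = fw m (n - 1) t * (1 + t)" using fw_rel assms(1) by metis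
    show ?thesis unfolding D_def g_def M_def W using R
      by (simp add: field_simps)
  qed
  have Dsign: "(D t > 0 \<longleftrightarrow> g t > 0) \<and> (D t < 0 \<longleftrightarrow> g t < 0)" if "0 < t" "t < a" for t
  proof -
    have "fw m (n - 1) t / (P a - P t) > 0"
      using fw_pos[OF m0 that(1)] Ppos that by simp
    moreover have gen: "\<And>c y::real. c > 0 \<Longrightarrow> (c * y > 0 \<longleftrightarrow> y > 0) \<and> (c * y < 0 \<longleftrightarrow> y < 0)"
      by (auto simp: zero_less_mult_iff mult_less_0_iff)
    ultimately show ?thesis unfolding Dg[OF that] by blast
  qed
  have glam: "g lam = 0" using assms(8) mu_eq[OF assms(6) assms(7)] unfolding g_def by simp
  obtain s0 where s0: "lam < s0" "s0 < a" "g s0 > 0"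
  proof -
    have "continuous_on {0..a} P" using cP by simp
    moreover have "a \<in> {0..a}" using assms(1-8) by simp
    moreover have "A / real n > 0" using Apos npos by simp
    ultimately obtain d where d: "d > 0" "\<forall>y\<in>{0..a}. dist y a < d \<longrightarrow> dist (P y) (P a) < A / real n"
      unfolding continuous_on_iff by blast
    define t where "t = (max lam (a - d) + a) / 2"
    have t1: "lam < t" "t < a" "0 \<le> t" using assms(1-8) d unfolding t_def by auto
    have "dist t a < d" using d t1 unfolding t_def dist_real_def by auto
    then have "dist (P t) (P a) < A / real n" using d t1 by auto
    then have "P a - P t < A / real n" unfolding dist_real_def by auto
    then have "real n * (P a - P t) < A" using npos by (simp add: field_simps)
    moreover have "0 \<le> real n * (Q a - Q t)" using Qle[OF t1(3,2)] by simp
    ultimately have "real n * (P a - P t) < A + real n * (Q a - Q t)" by linarith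
    then have Mt: "M t > real n" unfolding M_def using Ppos[OF t1(3,2)]
      by (simp add: pos_less_divide_eq mult.commute)
    have "M t * t \<ge> 0" using Mt npos t1 by simp
    then have "g t > 0" unfolding g_def using Mt by (simp add: algebra_simps)
    then show ?thesis using that t1 by blast
  qed
  have gpos: "g t > 0" if "lam < t" "t < a" for t
  proof (rule ccontr)
    assume "\<not> g t > 0"
    then have gt: "g t \<le> 0" by simp
    have "\<exists>y. min t s0 \<le> y \<and> y \<le> max t s0 \<and> g y = 0"
    proof (cases "t \<le> s0")
      case True
      then show ?thesis using IVT'[of g t 0 s0] gt s0 cg[of t s0] assms(1-8) that by auto
    next
      case False
      then show ?thesis using IVT2'[of g t 0 s0] gt s0 cg[of s0 t] assms(1-8) that by auto
    qed
    then obtain y where y: "min t s0 \<le> y" "y \<le> max t s0" "g y = 0" by blast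
    have "y = lam" using uniq[of y] y s0 that assms(1-8) by auto
    then show False using y s0 that by auto
  qed
  have gneg: "g t < 0" if "0 \<le> t" "t < lam" for t
  proof (rule ccontr)
    assume "\<not> g t < 0"
    then have gt: "g t \<ge> 0" by simp
    have ta: "t < a" using that assms(7) by linarith
    have t0: "0 \<le> t" using that by simp
    obtain y where y: "0 \<le> y" "y \<le> t" "g y = 0"
      using IVT'[OF g0 gt t0 cg[OF order_refl ta]] by blast
    have "y = lam" using uniq[of y] y that assms(1-8) by auto
    then show False using y that by auto
  qed
  have Mlt: "M lam < M s"
  proof (cases "lam < s")
    case True
    have c: "continuous_on {lam..s} M" using cM assms(1-8) sx by auto
    have dif: "M differentiable (at y)" if "lam < y" "y < s" for y
      using dM[of y] that assms(1-8) sx real_differentiable_def by auto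
    obtain l z where z: "lam < z" "z < s" "M s - M lam = (s - lam) * l"
      and d: "(M has_real_derivative l) (at z)"
      using MVT[OF True c dif] by blast
    have z0: "0 < z" "z < a" using z assms(1-8) sx by auto
    have "l = D z" using DERIV_unique[OF d dM[OF z0]] .
    moreover have "g z > 0" using gpos z sx by auto
    ultimately have "l > 0" using Dsign[OF z0] by simp
    then have "(s - lam) * l > 0" using True by simp
    then show ?thesis using z by linarith
  next
    case False
    then have True: "s < lam" using sx by auto
    have c: "continuous_on {s..lam} M" using cM assms(1-8) sx by auto
    have dif: "M differentiable (at y)" if "s < y" "y < lam" for y
      using dM[of y] that assms(1-8) sx real_differentiable_def by auto
    obtain l z where z: "s < z" "z < lam" "M lam - M s = (lam - s) * l"
      and d: "(M has_real_derivative l) (at z)"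
      using MVT[OF True c dif] by blast
    have z0: "0 < z" "z < a" using z assms(1-8) sx by auto
    have "l = D z" using DERIV_unique[OF d dM[OF z0]] .
    moreover have "g z < 0" using gneg z sx by auto
    ultimately have "l < 0" using Dsign[OF z0] by simp
    then have "(lam - s) * l < 0" using True by (simp add: mult_pos_neg)
    then show ?thesis using z by linarith
  qed
  have num: "M t * (P x - P t) - real n * (Q x - Q t) = A + real n * (Q a - Q x) - M t * (P a - P x)"
    if "0 \<le> t" "t < a" for t
  proof -
    have R: "P a - P t \<noteq> 0" using Ppos[of t] that by simp
    have e1: "M t * (P a - P t) = A + real n * (Q a - Q t)" unfolding M_def using R by simp
    have e2: "M t * (P x - P t) = M t * (P a - P t) - M t * (P a - P x)" by (simp add: algebra_simps)
    show ?thesis using e1 e2 by (simp add: algebra_simps)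
  qed
  have PX: "P a - P x > 0" using Ppos sx by auto
  have ps: "psi_tilde m n a b t x = (M t * (P x - P t) - real n * (Q x - Q t)) / ((1 + x) ^ n * x powr m)"
    if "0 \<le> t" "t < a" for t
  proof -
    have "0 \<le> x" using sx by simp
    then show ?thesis unfolding psi_tilde_def mu_eq[OF that] P_def Q_def
      using Iint_PP[OF m0 that(1) \<open>0 \<le> x\<close>] by simp
  qed
  have den: "(1 + x) ^ n * x powr m > 0" using sx by simp
  have "M lam * (P a - P x) < M s * (P a - P x)" using Mlt PX by simp
  then have "M s * (P x - P s) - real n * (Q x - Q s) < M lam * (P x - P lam) - real n * (Q x - Q lam)"
    using num[of s] num[of lam] sx assms(1-8) by auto
  then show "psi_tilde m n a b s x < psi_tilde m n a b lam x"
    using ps[of s] ps[of lam] sx assms(1-8) den by (simp add: divide_strict_right_mono)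
qed

end
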